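(* Let $T$ be the weighted shift $Te_n=a_ne_{n+1}$ with a bounded sequence of nonzero weights. Then $\mathcal A_T$ is a (non-unital) integral domain: if $R,S\in\mathcal A_T$ are nonzero, then $RS\ne0$. Consequently, if $T$ is moreover quasinilpotent, every nonzero element of $\mathcal A_T$ is quasinilpotent but not nilpotent.
   Context: $H$ is a complex Hilbert space with orthonormal basis $\{e_n\}_{n\ge0}$, $(a_n)_{n\ge0}$ is a bounded sequence of nonzero complex numbers, $Te_n=a_ne_{n+1}$, and $\mathcal A_T$ is the operator-norm closure in $\mathcal B(H)$ of the polynomials $p(T)$ with $p(0)=0$. *)

theory Defs
  imports Complex_Main "HOL-Computational_Algebra.Polynomial"
begin

text \<open>The Hilbert space H with orthonormal basis e_n (n \<ge> 0) is modelled concretely as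
  l2(N) of complex sequences; e_n is the n-th unit sequence. Operators are functions on
  sequences which are linear and bounded on l2 and (canonically) send every non-l2 sequence
  to 0, so that equality of operators is equality of functions.\<close>

definition l2 :: "(nat \<Rightarrow> complex) set" where
  "l2 = {x. summable (\<lambda>n. (cmod (x n))\<^sup>2)}"

definition l2norm :: "(nat \<Rightarrow> complex) \<Rightarrow> real" where
  "l2norm x = sqrt (\<Sum>n. (cmod (x n))\<^sup>2)"

definition sscale :: "complex \<Rightarrow> (nat \<Rightarrow> complex) \<Rightarrow> (nat \<Rightarrow> complex)" where
  "sscale c x = (\<lambda>n. c * x n)"

definition zero_op :: "(nat \<Rightarrow> complex) \<Rightarrow> (nat \<Rightarrow> complex)" where
  "zero_op = (\<lambda>x n. 0)"

definition id_op :: "(nat \<Rightarrow> complex) \<Rightarrow> (nat \<Rightarrow> complex)" where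
  "id_op = (\<lambda>x. if x \<in> l2 then x else (\<lambda>n. 0))"

definition is_bounded_op :: "((nat \<Rightarrow> complex) \<Rightarrow> (nat \<Rightarrow> complex)) \<Rightarrow> bool" where
  "is_bounded_op A \<longleftrightarrow>
     (\<forall>x\<in>l2. A x \<in> l2) \<and>
     (\<forall>x\<in>l2. \<forall>y\<in>l2. A (\<lambda>n. x n + y n) = (\<lambda>n. A x n + A y n)) \<and>
     (\<forall>x\<in>l2. \<forall>c. A (sscale c x) = sscale c (A x)) \<and>
     (\<exists>C. \<forall>x\<in>l2. l2norm (A x) \<le> C * l2norm x) \<and>
     (\<forall>x. x \<notin> l2 \<longrightarrow> A x = (\<lambda>n. 0))"

definition opnorm :: "((nat \<Rightarrow> complex) \<Rightarrow> (nat \<Rightarrow> complex)) \<Rightarrow> real" where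
  "opnorm A = Sup {l2norm (A x) | x. x \<in> l2 \<and> l2norm x \<le> 1}"

definition wshift :: "(nat \<Rightarrow> complex) \<Rightarrow> (nat \<Rightarrow> complex) \<Rightarrow> (nat \<Rightarrow> complex)" where
  "wshift a = (\<lambda>x. if x \<in> l2 then (\<lambda>n. if n = 0 then 0 else a (n - 1) * x (n - 1))
                   else (\<lambda>n. 0))"

definition poly_op :: "complex poly \<Rightarrow> ((nat \<Rightarrow> complex) \<Rightarrow> (nat \<Rightarrow> complex))
                        \<Rightarrow> (nat \<Rightarrow> complex) \<Rightarrow> (nat \<Rightarrow> complex)" where
  "poly_op p A = (\<lambda>x n. \<Sum>i\<le>degree p. coeff p i * (A ^^ i) x n)"

definition alg_AT :: "((nat \<Rightarrow> complex) \<Rightarrow> (nat \<Rightarrow> complex))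
                       \<Rightarrow> ((nat \<Rightarrow> complex) \<Rightarrow> (nat \<Rightarrow> complex)) set" where
  "alg_AT T = {R. is_bounded_op R \<and>
      (\<exists>p :: nat \<Rightarrow> complex poly. (\<forall>k. poly (p k) 0 = 0) \<and>
         (\<lambda>k. opnorm (\<lambda>x n. poly_op (p k) T x n - R x n)) \<longlonglongrightarrow> 0)}"

definition op_spectrum :: "((nat \<Rightarrow> complex) \<Rightarrow> (nat \<Rightarrow> complex)) \<Rightarrow> complex set" where
  "op_spectrum A = {\<mu>. \<not> (\<exists>B. is_bounded_op B \<and>
       (\<forall>x\<in>l2. B (\<lambda>n. A x n - \<mu> * x n) = x) \<and>
       (\<forall>x\<in>l2. (\<lambda>n. A (B x) n - \<mu> * B x n) = x))}"

definition quasinilpotent :: "((nat \<Rightarrow> complex) \<Rightarrow> (nat \<Rightarrow> complex)) \<Rightarrow> bool" where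
  "quasinilpotent A \<longleftrightarrow> op_spectrum A = {0}"

definition nilpotent_op :: "((nat \<Rightarrow> complex) \<Rightarrow> (nat \<Rightarrow> complex)) \<Rightarrow> bool" where
  "nilpotent_op A \<longleftrightarrow> (\<exists>k. A ^^ k = zero_op)"

end

theory Submission
  imports Defs "HOL-Analysis.Analysis"
begin


section \<open>l2 sequences\<close>

definition sq :: "(nat \<Rightarrow> complex) \<Rightarrow> nat \<Rightarrow> real" where
  "sq x n = (cmod (x n))\<^sup>2"

lemma sq_nonneg[simp]: "0 \<le> sq x n" by (simp add: sq_def)

lemma sq_eq: "sq x = (\<lambda>n. (cmod (x n))\<^sup>2)" by (simp add: fun_eq_iff sq_def)

lemma l2_iff: "x \<in> l2 \<longleftrightarrow> summable (sq x)" by (simp add: l2_def sq_eq)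

lemma l2norm_sq: "l2norm x = sqrt (suminf (sq x))" by (simp add: l2norm_def sq_eq)

lemma suminf_sq_nonneg: "x \<in> l2 \<Longrightarrow> 0 \<le> suminf (sq x)"
  by (rule suminf_nonneg) (auto simp: l2_iff)

lemma l2_partial_le: "x \<in> l2 \<Longrightarrow> (\<Sum>n<N. sq x n) \<le> suminf (sq x)"
  by (intro sum_le_suminf) (auto simp: l2_iff)

lemma l2_bounded:
  assumes "\<And>N. (\<Sum>n<N. sq x n) \<le> B"
  shows "x \<in> l2" "suminf (sq x) \<le> B"
proof -
  show "x \<in> l2" unfolding l2_iff by (rule summableI_nonneg_bounded[OF sq_nonneg assms])
  then show "suminf (sq x) \<le> B" using assms by (intro suminf_le_const) (auto simp: l2_iff)
qed

lemma l2norm_nonneg[simp]: "x \<in> l2 \<Longrightarrow> 0 \<le> l2norm x" by (simp add: l2norm_sq suminf_sq_nonneg)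

lemma l2_partial_norm_le: "x \<in> l2 \<Longrightarrow> sqrt (\<Sum>n<N. sq x n) \<le> l2norm x"
  unfolding l2norm_sq by (auto intro: l2_partial_le)

lemma l2_bounded_norm:
  assumes "\<And>N. sqrt (\<Sum>n<N. sq x n) \<le> B"
  shows "x \<in> l2" "l2norm x \<le> B"
proof -
  have B: "0 \<le> B" using assms[of 0] by simp
  have "(\<Sum>n<N. sq x n) \<le> B\<^sup>2" for N
    using assms[of N] B by (metis real_sqrt_le_iff real_sqrt_unique sum_nonneg sq_nonneg)
  from l2_bounded[OF this] show "x \<in> l2" "l2norm x \<le> B"
    using B by (auto simp: l2norm_sq real_sqrt_le_iff intro: real_le_lsqrt)
qed

lemma coord_le_l2norm: "x \<in> l2 \<Longrightarrow> cmod (x i) \<le> l2norm x"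
proof -
  assume x: "x \<in> l2"
  have "sq x i \<le> (\<Sum>n<Suc i. sq x n)" by (rule member_le_sum) auto
  also have "\<dots> \<le> suminf (sq x)" by (rule l2_partial_le[OF x])
  finally show ?thesis unfolding l2norm_sq sq_def by (simp add: real_le_rsqrt)
qed

lemma L2_set_eq: "sqrt (\<Sum>n<N. sq x n) = L2_set (\<lambda>n. cmod (x n)) {..<N}"
  by (simp add: L2_set_def sq_def)

lemma l2_zero[simp]: "(\<lambda>n. 0) \<in> l2" by (simp add: l2_def)

lemma l2_scale: "x \<in> l2 \<Longrightarrow> (\<lambda>n. c * x n) \<in> l2"
  unfolding l2_iff sq_def by (simp add: norm_mult power_mult_distrib summable_mult)

lemma l2norm_scale: "x \<in> l2 \<Longrightarrow> l2norm (\<lambda>n. c * x n) = cmod c * l2norm x"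
  unfolding l2norm_sq sq_eq using suminf_mult[of "\<lambda>n. (cmod (x n))\<^sup>2" "(cmod c)\<^sup>2"]
  by (simp add: l2_iff sq_eq norm_mult power_mult_distrib real_sqrt_mult)

lemma l2_add_triangle:
  assumes x: "x \<in> l2" and y: "y \<in> l2"
  shows "(\<lambda>n. x n + y n) \<in> l2" "l2norm (\<lambda>n. x n + y n) \<le> l2norm x + l2norm y"
proof -
  have "sqrt (\<Sum>n<N. sq (\<lambda>n. x n + y n) n) \<le> l2norm x + l2norm y" for N
  proof -
    have "sqrt (\<Sum>n<N. sq (\<lambda>n. x n + y n) n) = L2_set (\<lambda>n. cmod (x n + y n)) {..<N}"
      by (rule L2_set_eq)
    also have "\<dots> \<le> L2_set (\<lambda>n. cmod (x n) + cmod (y n)) {..<N}"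
      by (rule L2_set_mono) (auto intro: norm_triangle_ineq)
    also have "\<dots> \<le> L2_set (\<lambda>n. cmod (x n)) {..<N} + L2_set (\<lambda>n. cmod (y n)) {..<N}"
      by (rule L2_set_triangle_ineq)
    also have "\<dots> \<le> l2norm x + l2norm y"
      using l2_partial_norm_le[OF x, of N] l2_partial_norm_le[OF y, of N]
      by (simp add: L2_set_eq)
    finally show ?thesis .
  qed
  from l2_bounded_norm[OF this]
  show "(\<lambda>n. x n + y n) \<in> l2" "l2norm (\<lambda>n. x n + y n) \<le> l2norm x + l2norm y" by auto
qed

lemma l2_add: "x \<in> l2 \<Longrightarrow> y \<in> l2 \<Longrightarrow> (\<lambda>n. x n + y n) \<in> l2"
  by (rule l2_add_triangle)

lemma l2_uminus: "x \<in> l2 \<Longrightarrow> (\<lambda>n. - x n) \<in> l2"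
  using l2_scale[of x "-1"] by simp

lemma l2_diff: "x \<in> l2 \<Longrightarrow> y \<in> l2 \<Longrightarrow> (\<lambda>n. x n - y n) \<in> l2"
  using l2_add[of x "\<lambda>n. - y n"] l2_uminus[of y] by simp

lemma l2norm_eq_0: "x \<in> l2 \<Longrightarrow> l2norm x = 0 \<longleftrightarrow> x = (\<lambda>n. 0)"
  unfolding l2norm_sq
  by (subst real_sqrt_eq_zero_cancel_iff, subst suminf_eq_zero_iff)
     (auto simp: l2_iff sq_def fun_eq_iff)


typedef ell2 = "l2" morphisms vec Abs_ell2
  by (rule exI[of _ "\<lambda>n. 0"]) simp

setup_lifting type_definition_ell2

lemma vec_l2[simp]: "vec x \<in> l2" using vec by simp

instantiation ell2 :: real_normed_vector
begin
lift_definition zero_ell2 :: ell2 is "\<lambda>n. 0" by simp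
lift_definition plus_ell2 :: "ell2 \<Rightarrow> ell2 \<Rightarrow> ell2" is "\<lambda>x y n. x n + y n" by (rule l2_add)
lift_definition uminus_ell2 :: "ell2 \<Rightarrow> ell2" is "\<lambda>x n. - x n" by (rule l2_uminus)
lift_definition minus_ell2 :: "ell2 \<Rightarrow> ell2 \<Rightarrow> ell2" is "\<lambda>x y n. x n - y n" by (rule l2_diff)
lift_definition scaleR_ell2 :: "real \<Rightarrow> ell2 \<Rightarrow> ell2" is "\<lambda>r x n. complex_of_real r * x n"
  by (rule l2_scale)
lift_definition norm_ell2 :: "ell2 \<Rightarrow> real" is l2norm .
definition sgn_ell2 :: "ell2 \<Rightarrow> ell2" where "sgn_ell2 x = scaleR (inverse (norm x)) x"
definition dist_ell2 :: "ell2 \<Rightarrow> ell2 \<Rightarrow> real" where "dist_ell2 x y = norm (x - y)"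
definition uniformity_ell2 :: "(ell2 \<times> ell2) filter" where
  "uniformity_ell2 = (INF e\<in>{0<..}. principal {(x, y). dist x y < e})"
definition open_ell2 :: "ell2 set \<Rightarrow> bool" where
  "open_ell2 U = (\<forall>x\<in>U. \<forall>\<^sub>F (x', y) in uniformity. x' = x \<longrightarrow> y \<in> U)"
instance
proof
  fix x y z :: ell2 and a b :: real
  show "x + y + z = x + (y + z)" by transfer (simp add: add.assoc)
  show "x + y = y + x" by transfer (simp add: add.commute)
  show "0 + x = x" by transfer simp
  show "- x + x = 0" by transfer simp
  show "x - y = x + - y" by transfer simp
  show "a *\<^sub>R (x + y) = a *\<^sub>R x + a *\<^sub>R y" by transfer (simp add: distrib_left)
  show "(a + b) *\<^sub>R x = a *\<^sub>R x + b *\<^sub>R x" by transfer (simp add: distrib_right)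
  show "a *\<^sub>R b *\<^sub>R x = (a * b) *\<^sub>R x" by transfer (simp add: mult.assoc)
  show "1 *\<^sub>R x = x" by transfer simp
  show "(norm x = 0) = (x = 0)" by transfer (rule l2norm_eq_0)
  show "norm (x + y) \<le> norm x + norm y" by transfer (rule l2_add_triangle(2))
  show "norm (a *\<^sub>R x) = \<bar>a\<bar> * norm x" by transfer (simp add: l2norm_scale)
  show "sgn x = inverse (norm x) *\<^sub>R x" by (simp add: sgn_ell2_def)
  show "dist x y = norm (x - y)" by (simp add: dist_ell2_def)
  show "(uniformity :: (ell2 \<times> ell2) filter) = (INF e\<in>{0<..}. principal {(x, y). dist x y < e})"
    by (simp add: uniformity_ell2_def)
  fix U :: "ell2 set"
  show "open U = (\<forall>x\<in>U. \<forall>\<^sub>F (x', y) in uniformity. x' = x \<longrightarrow> y \<in> U)"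
    by (simp add: open_ell2_def)
qed
end

lemma vec_plus[simp]: "vec (x + y) = (\<lambda>n. vec x n + vec y n)" by transfer simp
lemma vec_minus[simp]: "vec (x - y) = (\<lambda>n. vec x n - vec y n)" by transfer simp
lemma vec_uminus[simp]: "vec (- x) = (\<lambda>n. - vec x n)" by transfer simp
lemma vec_zero[simp]: "vec 0 = (\<lambda>n. 0)" by transfer simp
lemma vec_scaleR[simp]: "vec (r *\<^sub>R x) = (\<lambda>n. complex_of_real r * vec x n)" by transfer simp
lemma norm_vec: "norm x = l2norm (vec x)" by transfer simp
lemma vec_inject': "x = y \<longleftrightarrow> vec x = vec y" by (simp add: vec_inject)

lemma coord_le_norm: "cmod (vec x i) \<le> norm x"
  by (simp add: norm_vec coord_le_l2norm)


lemma ell2_complete_aux: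
  fixes X :: "nat \<Rightarrow> ell2"
  assumes C: "Cauchy X"
  shows "convergent X"
proof -
  have Ci: "Cauchy (\<lambda>k. vec (X k) i)" for i
  proof (rule CauchyI)
    fix e :: real assume "0 < e"
    from CauchyD[OF C this] obtain M where M: "\<forall>m\<ge>M. \<forall>n\<ge>M. norm (X m - X n) < e" by blast
    show "\<exists>M. \<forall>m\<ge>M. \<forall>n\<ge>M. norm (vec (X m) i - vec (X n) i) < e"
    proof (intro exI allI impI)
      fix m n assume "M \<le> m" "M \<le> n"
      have "norm (vec (X m) i - vec (X n) i) = cmod (vec (X m - X n) i)" by simp
      also have "\<dots> \<le> norm (X m - X n)" by (rule coord_le_norm)
      also have "\<dots> < e" using M \<open>M \<le> m\<close> \<open>M \<le> n\<close> by blast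
      finally show "norm (vec (X m) i - vec (X n) i) < e" .
    qed
  qed
  define y where "y i = lim (\<lambda>k. vec (X k) i)" for i
  have yl: "(\<lambda>k. vec (X k) i) \<longlonglongrightarrow> y i" for i
    using Ci[of i] unfolding y_def by (simp add: Cauchy_convergent_iff convergent_LIMSEQ_iff)
  have main: "\<exists>K. \<forall>k\<ge>K. (\<lambda>n. vec (X k) n - y n) \<in> l2 \<and> l2norm (\<lambda>n. vec (X k) n - y n) \<le> e"
    if e: "0 < e" for e
  proof -
    from CauchyD[OF C e] obtain M where M: "\<forall>m\<ge>M. \<forall>n\<ge>M. norm (X m - X n) < e" by blast
    show ?thesis
    proof (intro exI allI impI)
      fix k assume k: "M \<le> k"
      have "sqrt (\<Sum>n<N. sq (\<lambda>n. vec (X k) n - y n) n) \<le> e" for N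
      proof -
        have lim: "(\<lambda>l. \<Sum>n<N. sq (\<lambda>n. vec (X k) n - vec (X l) n) n) \<longlonglongrightarrow> (\<Sum>n<N. sq (\<lambda>n. vec (X k) n - y n) n)"
          unfolding sq_def by (intro tendsto_intros yl)
        have "(\<Sum>n<N. sq (\<lambda>n. vec (X k) n - y n) n) \<le> e\<^sup>2"
        proof (rule LIMSEQ_le_const2[OF lim], intro exI allI impI)
          fix l assume l: "M \<le> l"
          have "(\<Sum>n<N. sq (\<lambda>n. vec (X k) n - vec (X l) n) n) = (\<Sum>n<N. sq (vec (X k - X l)) n)"
            by simp
          also have "\<dots> \<le> (sqrt (\<Sum>n<N. sq (vec (X k - X l)) n))\<^sup>2"
            by (simp add: sum_nonneg)
          also have "\<dots> \<le> (norm (X k - X l))\<^sup>2"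
            by (intro power_mono) (auto simp: norm_vec sum_nonneg intro!: l2_partial_norm_le l2_diff)
          also have "\<dots> \<le> e\<^sup>2" using M k l
            by (intro power_mono) (auto intro: less_imp_le)
          finally show "(\<Sum>n<N. sq (\<lambda>n. vec (X k) n - vec (X l) n) n) \<le> e\<^sup>2" .
        qed
        then show ?thesis using e by (simp add: real_sqrt_le_iff real_le_lsqrt sum_nonneg)
      qed
      from l2_bounded_norm[OF this]
      show "(\<lambda>n. vec (X k) n - y n) \<in> l2 \<and> l2norm (\<lambda>n. vec (X k) n - y n) \<le> e" by auto
    qed
  qed
  obtain K where "(\<lambda>n. vec (X K) n - y n) \<in> l2" using main[of 1] by auto
  from l2_diff[OF vec_l2[of "X K"] this] have yl2: "y \<in> l2" by simp
  have "X \<longlonglongrightarrow> Abs_ell2 y"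
  proof (rule LIMSEQ_I)
    fix r :: real assume "0 < r"
    then obtain K where K: "\<forall>k\<ge>K. l2norm (\<lambda>n. vec (X k) n - y n) \<le> r/2" using main[of "r/2"] by auto
    show "\<exists>no. \<forall>n\<ge>no. norm (X n - Abs_ell2 y) < r"
    proof (intro exI allI impI)
      fix k assume "K \<le> k"
      then have "norm (X k - Abs_ell2 y) \<le> r/2" using K yl2 by (simp add: norm_vec Abs_ell2_inverse)
      then show "norm (X k - Abs_ell2 y) < r" using \<open>0 < r\<close> by simp
    qed
  qed
  then show ?thesis by (auto simp: convergent_def)
qed

instance ell2 :: banach
  by standard (rule ell2_complete_aux)


lift_definition csc :: "complex \<Rightarrow> ell2 \<Rightarrow> ell2" is "\<lambda>c x n. c * x n" by (rule l2_scale)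
lemma vec_csc[simp]: "vec (csc c x) = (\<lambda>n. c * vec x n)" by transfer simp
lemma norm_csc: "norm (csc c x) = cmod c * norm x" by transfer (simp add: l2norm_scale)
lemma bl_csc: "bounded_linear (csc c)"
  by (rule bounded_linear_intro[where K="cmod c"])
     (auto simp: vec_inject' fun_eq_iff algebra_simps norm_csc)
definition cs :: "complex \<Rightarrow> ell2 \<Rightarrow>\<^sub>L ell2" where "cs c = Blinfun (csc c)"
lemma cs_apply[simp]: "blinfun_apply (cs c) x = csc c x"
  by (simp add: cs_def bounded_linear_Blinfun_apply bl_csc)
lemma norm_cs: "norm (cs c) \<le> cmod c" by (rule norm_blinfun_bound) (auto simp: norm_csc)

definition clin :: "(ell2 \<Rightarrow>\<^sub>L ell2) \<Rightarrow> bool" where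
  "clin A \<longleftrightarrow> (\<forall>c x. A (csc c x) = csc c (A x))"

lemma bop_l2: "is_bounded_op A \<Longrightarrow> x \<in> l2 \<Longrightarrow> A x \<in> l2" by (simp add: is_bounded_op_def)
lemma bop_add: "is_bounded_op A \<Longrightarrow> x \<in> l2 \<Longrightarrow> y \<in> l2 \<Longrightarrow> A (\<lambda>n. x n + y n) = (\<lambda>n. A x n + A y n)"
  by (simp add: is_bounded_op_def)
lemma bop_scale: "is_bounded_op A \<Longrightarrow> x \<in> l2 \<Longrightarrow> A (\<lambda>n. c * x n) = (\<lambda>n. c * A x n)"
  by (simp add: is_bounded_op_def sscale_def)
lemma bop_out: "is_bounded_op A \<Longrightarrow> x \<notin> l2 \<Longrightarrow> A x = (\<lambda>n. 0)"
  by (simp add: is_bounded_op_def)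
lemma bop_zero: "is_bounded_op A \<Longrightarrow> A (\<lambda>n. 0) = (\<lambda>n. 0)"
  using bop_scale[of A "\<lambda>n. 0" 0] by simp

lemma bop_bounded_linear:
  assumes A: "is_bounded_op A"
  shows "bounded_linear (\<lambda>x. Abs_ell2 (A (vec x)))"
proof -
  obtain C where C: "\<forall>x\<in>l2. l2norm (A x) \<le> C * l2norm x" using A by (auto simp: is_bounded_op_def)
  show ?thesis
  proof (rule bounded_linear_intro[where K=C])
    fix x y :: ell2 and r :: real
    show "Abs_ell2 (A (vec (x + y))) = Abs_ell2 (A (vec x)) + Abs_ell2 (A (vec y))"
      using A by (simp add: vec_inject' Abs_ell2_inverse bop_l2 bop_add l2_add)
    show "Abs_ell2 (A (vec (r *\<^sub>R x))) = r *\<^sub>R Abs_ell2 (A (vec x))"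
      using A by (simp add: vec_inject' Abs_ell2_inverse bop_l2 bop_scale l2_scale)
    show "norm (Abs_ell2 (A (vec x))) \<le> norm x * C"
      using A C by (simp add: norm_vec Abs_ell2_inverse bop_l2 mult.commute)
  qed
qed

definition toL :: "((nat \<Rightarrow> complex) \<Rightarrow> (nat \<Rightarrow> complex)) \<Rightarrow> ell2 \<Rightarrow>\<^sub>L ell2" where
  "toL A = Blinfun (\<lambda>x. Abs_ell2 (A (vec x)))"

lemma vec_toL: "is_bounded_op A \<Longrightarrow> vec (toL A x) = A (vec x)"
  by (simp add: toL_def bounded_linear_Blinfun_apply bop_bounded_linear Abs_ell2_inverse bop_l2)

lemma toL_clin: "is_bounded_op A \<Longrightarrow> clin (toL A)"
  by (simp add: clin_def vec_inject' vec_toL bop_scale)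

lemma bop_eq_toL: "is_bounded_op A \<Longrightarrow> A x = (if x \<in> l2 then vec (toL A (Abs_ell2 x)) else (\<lambda>n. 0))"
  by (simp add: vec_toL Abs_ell2_inverse bop_out)

lemma opnorm_bdd:
  assumes A: "is_bounded_op A"
  shows "bdd_above {l2norm (A x) | x. x \<in> l2 \<and> l2norm x \<le> 1}"
proof -
  obtain C where C: "\<forall>x\<in>l2. l2norm (A x) \<le> C * l2norm x" using A by (auto simp: is_bounded_op_def)
  show ?thesis
  unfolding bdd_above_def
  proof (intro exI[of _ "max C 0"] ballI)
    fix s assume "s \<in> {l2norm (A x) | x. x \<in> l2 \<and> l2norm x \<le> 1}"
    then obtain z where z: "z \<in> l2" "l2norm z \<le> 1" "s = l2norm (A z)" by auto
    have "s \<le> C * l2norm z" using C z by auto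
    also have "\<dots> \<le> max C 0"
    proof (cases "C \<ge> 0")
      case True then show ?thesis using z by (simp add: mult_left_le)
    next
      case False then show ?thesis using z by (simp add: mult_nonpos_nonneg)
    qed
    finally show "s \<le> max C 0" .
  qed
qed

lemma opnorm_upper:
  assumes A: "is_bounded_op A" and "u \<in> l2" "l2norm u \<le> 1"
  shows "l2norm (A u) \<le> opnorm A"
  unfolding opnorm_def by (rule cSup_upper[OF _ opnorm_bdd[OF A]]) (use assms in auto)

lemma opnorm_nonneg:
  assumes A: "is_bounded_op A" shows "0 \<le> opnorm A"
  using opnorm_upper[OF A, of "\<lambda>n. 0"] A by (simp add: bop_zero l2norm_def)

lemma opnorm_bound:
  assumes A: "is_bounded_op A" and x: "x \<in> l2"
  shows "l2norm (A x) \<le> opnorm A * l2norm x"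
proof (cases "l2norm x = 0")
  case True
  then have "x = (\<lambda>n. 0)" using l2norm_eq_0[OF x] by simp
  then show ?thesis using A True by (simp add: bop_zero l2norm_def)
next
  case False
  then have nx: "0 < l2norm x" using l2norm_nonneg[OF x] by linarith
  define u where "u = (\<lambda>n. complex_of_real (1 / l2norm x) * x n)"
  have u: "u \<in> l2" unfolding u_def by (rule l2_scale[OF x])
  have u1: "l2norm u = 1" unfolding u_def l2norm_scale[OF x] using nx by (simp add: norm_divide)
  have "l2norm (A u) = l2norm (A x) / l2norm x"
    unfolding u_def bop_scale[OF A x] l2norm_scale[OF bop_l2[OF A x]] using nx by (simp add: norm_divide)
  moreover have "l2norm (A u) \<le> opnorm A" using opnorm_upper[OF A u] u1 by simp
  ultimately show ?thesis using nx
    by (metis mult.commute mult_left_mono less_imp_le nonzero_mult_div_cancel_left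
        less_irrefl times_divide_eq_right)
qed

lemma norm_toL_le:
  assumes A: "is_bounded_op A" shows "norm (toL A) \<le> opnorm A"
  by (rule norm_blinfun_bound[OF opnorm_nonneg[OF A]])
     (simp add: norm_vec vec_toL A opnorm_bound)


section \<open>Shifts\<close>

lemma sum_shift_if:
  fixes f :: "nat \<Rightarrow> real"
  shows "(\<Sum>n<N. if n < j then 0 else f (n - j)) = (\<Sum>m<N-j. f m)"
  by (induction N) (auto simp: Suc_diff_le not_less)

lemma gen_shift:
  assumes x: "x \<in> l2" and w: "\<forall>n. cmod (w n) \<le> K"
  shows "(\<lambda>n. if n < j then 0 else w n * x (n - j)) \<in> l2"
    "l2norm (\<lambda>n. if n < j then 0 else w n * x (n - j)) \<le> K * l2norm x"
proof -
  define y where "y = (\<lambda>n. if n < j then 0 else w n * x (n - j))"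
  have K: "0 \<le> K" using w norm_ge_zero order_trans by blast
  have "sqrt (\<Sum>n<N. sq y n) \<le> K * l2norm x" for N
  proof -
    have "(\<Sum>n<N. sq y n) \<le> (\<Sum>n<N. if n<j then 0 else (\<lambda>m. K\<^sup>2 * sq x m) (n-j))"
      by (intro sum_mono)
         (auto simp: y_def sq_def norm_mult power_mult_distrib intro!: mult_right_mono power_mono w[rule_format])
    also have "\<dots> = K\<^sup>2 * (\<Sum>m<N-j. sq x m)"
      using sum_shift_if[where f="\<lambda>m. K\<^sup>2 * sq x m" and N=N and j=j] by (simp add: sum_distrib_left)
    also have "\<dots> \<le> K\<^sup>2 * suminf (sq x)" by (intro mult_left_mono l2_partial_le x) simp
    finally have "sqrt (\<Sum>n<N. sq y n) \<le> sqrt (K\<^sup>2 * suminf (sq x))" by simp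
    also have "\<dots> = K * l2norm x" using K by (simp add: l2norm_sq real_sqrt_mult)
    finally show ?thesis .
  qed
  from l2_bounded_norm[OF this] show "y \<in> l2" "l2norm y \<le> K * l2norm x" by auto
qed

lemma wshift_l2: "x \<in> l2 \<Longrightarrow> wshift a x = (\<lambda>n. if n < 1 then 0 else a (n - 1) * x (n - 1))"
  by (simp add: wshift_def)

lemma wshift_bop:
  assumes M: "\<forall>n. cmod (a n) \<le> M"
  shows "is_bounded_op (wshift a)"
proof -
  have M': "\<forall>n. cmod (a (n - 1)) \<le> M" using M by auto
  show ?thesis unfolding is_bounded_op_def
  proof (intro conjI ballI allI impI)
    fix x assume x: "x \<in> l2"
    show "wshift a x \<in> l2" using gen_shift(1)[OF x M', of 1] x by (simp add: wshift_l2)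
  next
    fix x y assume x: "x \<in> l2" and y: "y \<in> l2"
    show "wshift a (\<lambda>n. x n + y n) = (\<lambda>n. wshift a x n + wshift a y n)"
      using x y l2_add[OF x y] by (simp add: wshift_l2 fun_eq_iff distrib_left)
  next
    fix x c assume x: "x \<in> l2"
    show "wshift a (sscale c x) = sscale c (wshift a x)"
      using x l2_scale[OF x, of c] by (simp add: wshift_l2 sscale_def fun_eq_iff)
  next
    show "\<exists>C. \<forall>x\<in>l2. l2norm (wshift a x) \<le> C * l2norm x"
    proof (intro exI[of _ M] ballI)
      fix x assume x: "x \<in> l2"
      show "l2norm (wshift a x) \<le> M * l2norm x" using gen_shift(2)[OF x M', of 1] x by (simp add: wshift_l2)
    qed
  next
    fix x assume "x \<notin> l2" then show "wshift a x = (\<lambda>n. 0)" by (simp add: wshift_def)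
  qed
qed

primrec pw :: "('a::real_normed_vector \<Rightarrow>\<^sub>L 'a) \<Rightarrow> nat \<Rightarrow> ('a \<Rightarrow>\<^sub>L 'a)" where
  "pw A 0 = id_blinfun"
| "pw A (Suc n) = A o\<^sub>L pw A n"

lemma pw_Suc2: "pw A (Suc n) x = pw A n (A x)"
  by (induction n arbitrary: x) auto

lemma pw_add: "pw A (m + n) = pw A m o\<^sub>L pw A n"
  by (induction m) (auto intro!: blinfun_eqI)

lemma norm_pw: "norm (pw A n) \<le> norm A ^ n"
proof (induction n)
  case 0 then show ?case by (simp add: norm_blinfun_id_le)
next
  case (Suc n)
  have "norm (pw A (Suc n)) \<le> norm A * norm (pw A n)" by (simp add: norm_blinfun_compose)
  also have "\<dots> \<le> norm A * norm A ^ n" using Suc by (simp add: mult_left_mono)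
  finally show ?case by simp
qed

definition comm :: "('a::real_normed_vector \<Rightarrow>\<^sub>L 'a) \<Rightarrow> ('a \<Rightarrow>\<^sub>L 'a) \<Rightarrow> bool" where
  "comm A B \<longleftrightarrow> (\<forall>x. A (B x) = B (A x))"

lemma comm_sym: "comm A B \<Longrightarrow> comm B A" by (simp add: comm_def)

lemma comm_pw: "comm A B \<Longrightarrow> comm (pw A n) B"
  by (induction n) (auto simp: comm_def)

lemma comm_pw_self: "comm (pw A m) (pw A n)"
  unfolding comm_def by (metis pw_add add.commute blinfun_apply_blinfun_compose)
    
lemma pw_comp: "comm A B \<Longrightarrow> pw (A o\<^sub>L B) n = pw A n o\<^sub>L pw B n"
proof (induction n)
  case 0 then show ?case by (auto intro!: blinfun_eqI)
next
  case (Suc n)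
  have "comm (pw A n) B" using comm_pw[OF Suc.prems] .
  then show ?case using Suc by (auto intro!: blinfun_eqI simp: comm_def)
qed

definition pr :: "(nat \<Rightarrow> complex) \<Rightarrow> nat \<Rightarrow> nat \<Rightarrow> complex" where
  "pr a k j = (\<Prod>i<j. a (k + i))"

lemma pr_Suc: "pr a k (Suc j) = pr a k j * a (k + j)"
  by (simp add: pr_def)

lemma vec_T:
  assumes M: "\<forall>n. cmod (a n) \<le> M"
  shows "vec (toL (wshift a) x) = (\<lambda>n. if n = 0 then 0 else a (n - 1) * vec x (n - 1))"
  by (simp add: vec_toL[OF wshift_bop[OF M]] wshift_l2)

lemma vec_pwT:
  assumes M: "\<forall>n. cmod (a n) \<le> M"
  shows "vec (pw (toL (wshift a)) j x) n = (if n < j then 0 else pr a (n - j) j * vec x (n - j))"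
proof (induction j arbitrary: n)
  case 0 then show ?case by (simp add: pr_def)
next
  case (Suc j)
  show ?case
  proof (cases "n < Suc j")
    case True then show ?thesis using Suc[of "n - 1"] by (auto simp: vec_T[OF M])
  next
    case False
    then have n: "n \<noteq> 0" "\<not> n - 1 < j" "n - 1 - j = n - Suc j" "n - Suc j + j = n - 1" by auto
    show ?thesis using False Suc[of "n - 1"] n by (simp add: vec_T[OF M] pr_Suc)
  qed
qed

lemma norm_pwT:
  assumes M: "\<forall>n. cmod (a n) \<le> M" and K: "\<forall>k. cmod (pr a k j) \<le> K"
  shows "norm (pw (toL (wshift a)) j) \<le> K"
proof (rule norm_blinfun_bound)
  show K0: "0 \<le> K" using K norm_ge_zero order_trans by blast
  fix x :: ell2
  have K': "\<forall>n. cmod (pr a (n - j) j) \<le> K" using K by auto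
  show "norm (pw (toL (wshift a)) j x) \<le> K * norm x"
  proof -
    have "vec (pw (toL (wshift a)) j x) = (\<lambda>n. if n < j then 0 else pr a (n - j) j * vec x (n - j))"
      by (rule ext, rule vec_pwT[OF M])
    then show ?thesis unfolding norm_vec using gen_shift(2)[OF vec_l2[of x] K', of j] by simp
  qed
qed


lemma vec_sum: "vec (sum f I) = (\<lambda>n. \<Sum>i\<in>I. vec (f i) n)"
  by (induction I rule: infinite_finite_induct) auto

lemma csc_add: "csc c (x + y) = csc c x + csc c y"
  by (simp add: vec_inject' fun_eq_iff distrib_left)
lemma csc_diff: "csc c (x - y) = csc c x - csc c y"
  by (simp add: vec_inject' fun_eq_iff right_diff_distrib)
lemma csc_sum: "csc c (sum f I) = (\<Sum>i\<in>I. csc c (f i))"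
  by (simp add: vec_inject' vec_sum fun_eq_iff sum_distrib_left)
lemma csc_csc: "csc c (csc d x) = csc (c * d) x"
  by (simp add: vec_inject' fun_eq_iff)
lemma csc_1[simp]: "csc 1 x = x"
  by (simp add: vec_inject' fun_eq_iff)

lemma clin_comp: "clin A \<Longrightarrow> clin B \<Longrightarrow> clin (A o\<^sub>L B)" by (simp add: clin_def)
lemma clin_add: "clin A \<Longrightarrow> clin B \<Longrightarrow> clin (A + B)" by (simp add: clin_def blinfun.add_left csc_add)
lemma clin_diff: "clin A \<Longrightarrow> clin B \<Longrightarrow> clin (A - B)" by (simp add: clin_def blinfun.diff_left csc_diff)
lemma clin_zero: "clin 0" by (simp add: clin_def vec_inject' fun_eq_iff)
lemma clin_sum: "(\<And>i. i \<in> I \<Longrightarrow> clin (f i)) \<Longrightarrow> clin (sum f I)"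
  by (induction I rule: infinite_finite_induct) (auto intro: clin_add clin_zero)
lemma clin_cs: "clin (cs c)" by (simp add: clin_def csc_csc mult.commute)
lemma clin_id: "clin id_blinfun" by (simp add: clin_def)
lemma clin_pw: "clin A \<Longrightarrow> clin (pw A n)" by (induction n) (auto intro: clin_comp clin_id)

definition fromL :: "(ell2 \<Rightarrow>\<^sub>L ell2) \<Rightarrow> (nat \<Rightarrow> complex) \<Rightarrow> (nat \<Rightarrow> complex)" where
  "fromL L x = (if x \<in> l2 then vec (L (Abs_ell2 x)) else (\<lambda>n. 0))"

lemma Abs_add: "x \<in> l2 \<Longrightarrow> y \<in> l2 \<Longrightarrow> Abs_ell2 (\<lambda>n. x n + y n) = Abs_ell2 x + Abs_ell2 y"
  by (simp add: vec_inject' Abs_ell2_inverse l2_add)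
lemma Abs_scale: "x \<in> l2 \<Longrightarrow> Abs_ell2 (\<lambda>n. c * x n) = csc c (Abs_ell2 x)"
  by (simp add: vec_inject' Abs_ell2_inverse l2_scale)

lemma fromL_bop:
  assumes L: "clin L" shows "is_bounded_op (fromL L)"
  unfolding is_bounded_op_def
proof (intro conjI ballI allI impI)
  fix x assume "x \<in> l2" then show "fromL L x \<in> l2" by (simp add: fromL_def)
next
  fix x y assume x: "x \<in> l2" and y: "y \<in> l2"
  show "fromL L (\<lambda>n. x n + y n) = (\<lambda>n. fromL L x n + fromL L y n)"
    using x y by (simp add: fromL_def l2_add Abs_add blinfun.add_right)
next
  fix x c assume x: "x \<in> l2"
  show "fromL L (sscale c x) = sscale c (fromL L x)"
    using x L by (simp add: fromL_def sscale_def l2_scale Abs_scale clin_def)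
next
  show "\<exists>C. \<forall>x\<in>l2. l2norm (fromL L x) \<le> C * l2norm x"
  proof (intro exI[of _ "norm L"] ballI)
    fix x assume x: "x \<in> l2"
    have "norm (L (Abs_ell2 x)) \<le> norm L * norm (Abs_ell2 x)" by (rule norm_blinfun)
    then show "l2norm (fromL L x) \<le> norm L * l2norm x"
      using x by (simp add: fromL_def norm_vec Abs_ell2_inverse)
  qed
next
  fix x assume "x \<notin> l2" then show "fromL L x = (\<lambda>n. 0)" by (simp add: fromL_def)
qed

lemma toL_fromL: "clin L \<Longrightarrow> toL (fromL L) = L"
  by (rule blinfun_eqI) (simp add: vec_inject' vec_toL fromL_bop fromL_def vec_inverse)

lemma fromL_toL: "is_bounded_op A \<Longrightarrow> fromL (toL A) = A"
  by (rule ext) (simp add: fromL_def vec_toL Abs_ell2_inverse bop_out)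

definition polyL :: "(ell2 \<Rightarrow>\<^sub>L ell2) \<Rightarrow> complex poly \<Rightarrow> ell2 \<Rightarrow>\<^sub>L ell2" where
  "polyL T p = (\<Sum>i\<le>degree p. cs (coeff p i) o\<^sub>L pw T i)"

lemma clin_polyL: "clin T \<Longrightarrow> clin (polyL T p)"
  unfolding polyL_def by (intro clin_sum clin_comp clin_cs clin_pw)

lemma funpow_wshift_l2:
  assumes M: "\<forall>n. cmod (a n) \<le> M" and x: "x \<in> l2"
  shows "(wshift a ^^ i) x = vec (pw (toL (wshift a)) i (Abs_ell2 x))"
proof (induction i)
  case 0 then show ?case using x by (simp add: Abs_ell2_inverse)
next
  case (Suc i) then show ?case by (simp add: vec_toL[OF wshift_bop[OF M]])
qed

lemma funpow_wshift_out:
  assumes x: "x \<notin> l2"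
  shows "(wshift a ^^ Suc i) x = (\<lambda>n. 0)"
proof (induction i)
  case 0 then show ?case using x by (simp add: wshift_def)
next
  case (Suc i)
  have "(wshift a ^^ Suc (Suc i)) x = wshift a ((wshift a ^^ Suc i) x)" by simp
  also have "\<dots> = wshift a (\<lambda>n. 0)" using Suc by simp
  also have "\<dots> = (\<lambda>n. 0)" by (simp add: wshift_def fun_eq_iff)
  finally show ?case .
qed

lemma poly_op_eq:
  assumes M: "\<forall>n. cmod (a n) \<le> M" and p0: "poly p 0 = 0"
  shows "poly_op p (wshift a) = fromL (polyL (toL (wshift a)) p)"
proof (intro ext)
  fix x n
  have c0: "coeff p 0 = 0" using p0 by (simp add: poly_0_coeff_0)
  show "poly_op p (wshift a) x n = fromL (polyL (toL (wshift a)) p) x n"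
  proof (cases "x \<in> l2")
    case True then show ?thesis
      by (simp add: poly_op_def fromL_def polyL_def funpow_wshift_l2[OF M] vec_sum blinfun.sum_left)
  next
    case False
    have "coeff p i * (wshift a ^^ i) x n = 0" for i
      using False c0 by (cases i) (simp_all add: funpow_wshift_out[OF False] del: funpow.simps)
    then have "(\<Sum>i\<le>degree p. coeff p i * (wshift a ^^ i) x n) = 0" by (intro sum.neutral) auto
    then show ?thesis using False by (simp add: poly_op_def fromL_def)
  qed
qed


section \<open>Commutation and approximation\<close>

lemma comm_add: "comm A S \<Longrightarrow> comm B S \<Longrightarrow> comm (A + B) S"
  by (simp add: comm_def blinfun.add_left blinfun.add_right)
lemma comm_diff: "comm A S \<Longrightarrow> comm B S \<Longrightarrow> comm (A - B) S"
  by (simp add: comm_def blinfun.diff_left blinfun.diff_right)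
lemma comm_comp: "comm A S \<Longrightarrow> comm B S \<Longrightarrow> comm (A o\<^sub>L B) S"
  by (simp add: comm_def)
lemma comm_zero: "comm 0 S" by (simp add: comm_def)
lemma comm_sum: "(\<And>i. i \<in> I \<Longrightarrow> comm (f i) S) \<Longrightarrow> comm (sum f I) S"
  by (induction I rule: infinite_finite_induct) (auto intro: comm_add comm_zero)
lemma comm_id: "comm id_blinfun S" by (simp add: comm_def)
lemma comm_cs: "clin S \<Longrightarrow> comm (cs c) S" by (simp add: comm_def clin_def)
lemma clin_iff_comm: "clin A \<longleftrightarrow> (\<forall>c. comm A (cs c))" by (simp add: comm_def clin_def)
lemma comm_refl: "comm A A" by (simp add: comm_def)

lemma comm_limit:
  assumes lim: "P \<longlonglongrightarrow> R" and c: "\<And>k. comm (P k) S"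
  shows "comm R S"
  unfolding comm_def
proof
  fix x
  have 1: "(\<lambda>k. P k (S x)) \<longlonglongrightarrow> R (S x)" by (rule blinfun.tendsto[OF lim tendsto_const])
  have 2: "(\<lambda>k. S (P k x)) \<longlonglongrightarrow> S (R x)"
    by (rule bounded_linear.tendsto[OF blinfun.bounded_linear_right blinfun.tendsto[OF lim tendsto_const]])
  have "(\<lambda>k. P k (S x)) = (\<lambda>k. S (P k x))" using c by (simp add: comm_def)
  with 1 2 show "R (S x) = S (R x)" using LIMSEQ_unique by metis
qed

lemma clin_limit: "P \<longlonglongrightarrow> R \<Longrightarrow> (\<And>k. clin (P k)) \<Longrightarrow> clin R"
  unfolding clin_iff_comm by (blast intro: comm_limit)

lemma comm_polyL: "clin S \<Longrightarrow> comm T S \<Longrightarrow> comm (polyL T p) S"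
  unfolding polyL_def by (intro comm_sum comm_comp comm_cs comm_pw)

lemma fromL_diff: "fromL (A - B) x n = fromL A x n - fromL B x n"
  by (simp add: fromL_def blinfun.diff_left)

lemma alg_AT_approx:
  assumes M: "\<forall>n. cmod (a n) \<le> M" and R: "R \<in> alg_AT (wshift a)"
  shows "is_bounded_op R"
    "\<exists>p. (\<forall>k. poly (p k) 0 = 0) \<and> (\<lambda>k. polyL (toL (wshift a)) (p k)) \<longlonglongrightarrow> toL R"
proof -
  show bR: "is_bounded_op R" using R by (simp add: alg_AT_def)
  obtain p where p0: "\<forall>k. poly (p k) 0 = 0"
    and lim: "(\<lambda>k. opnorm (\<lambda>x n. poly_op (p k) (wshift a) x n - R x n)) \<longlonglongrightarrow> 0"
    using R by (auto simp: alg_AT_def)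
  define T where "T = toL (wshift a)"
  have clT: "clin T" unfolding T_def by (rule toL_clin[OF wshift_bop[OF M]])
  have cl: "clin (polyL T (p k) - toL R)" for k
    by (intro clin_diff clin_polyL clT toL_clin bR)
  have D: "(\<lambda>x n. poly_op (p k) (wshift a) x n - R x n) = fromL (polyL T (p k) - toL R)" for k
  proof (intro ext)
    fix x n
    show "poly_op (p k) (wshift a) x n - R x n = fromL (polyL T (p k) - toL R) x n"
      unfolding fromL_diff poly_op_eq[OF M p0[rule_format]] fromL_toL[OF bR] T_def ..
  qed
  have le: "norm (polyL T (p k) - toL R) \<le> opnorm (\<lambda>x n. poly_op (p k) (wshift a) x n - R x n)" for k
    using norm_toL_le[OF fromL_bop[OF cl]] unfolding D toL_fromL[OF cl] .
  have "(\<lambda>k. polyL T (p k) - toL R) \<longlonglongrightarrow> 0"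
    by (rule Lim_null_comparison[OF _ lim]) (use le in auto)
  then have "(\<lambda>k. polyL T (p k)) \<longlonglongrightarrow> toL R" by (simp add: LIM_zero_iff)
  then show "\<exists>p. (\<forall>k. poly (p k) 0 = 0) \<and> (\<lambda>k. polyL (toL (wshift a)) (p k)) \<longlonglongrightarrow> toL R"
    using p0 unfolding T_def by blast
qed

lemma alg_AT_comm:
  assumes M: "\<forall>n. cmod (a n) \<le> M" and R: "R \<in> alg_AT (wshift a)"
  shows "comm (toL R) (toL (wshift a))"
proof -
  have bT: "is_bounded_op (wshift a)" by (rule wshift_bop[OF M])
  obtain p where "(\<lambda>k. polyL (toL (wshift a)) (p k)) \<longlonglongrightarrow> toL R" using alg_AT_approx(2)[OF M R] by blast
  then show ?thesis
    by (rule comm_limit) (intro comm_polyL toL_clin bT comm_refl)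
qed


definition ev :: "nat \<Rightarrow> nat \<Rightarrow> complex" where "ev j = (\<lambda>n. if n = j then 1 else 0)"

lemma ev_l2: "ev j \<in> l2"
proof (rule l2_bounded(1)[where B=1])
  fix N
  have "(\<Sum>n<N. sq (ev j) n) = (\<Sum>n<N. if n = j then 1 else 0)"
    by (intro sum.cong) (auto simp: sq_def ev_def)
  also have "\<dots> \<le> 1" by (simp add: sum.delta)
  finally show "(\<Sum>n<N. sq (ev j) n) \<le> 1" .
qed

definition e :: "nat \<Rightarrow> ell2" where "e j = Abs_ell2 (ev j)"
lemma vec_e: "vec (e j) = ev j" by (simp add: e_def Abs_ell2_inverse ev_l2)
lemma vec_e_apply: "vec (e j) n = (if n = j then 1 else 0)" by (simp add: vec_e ev_def)

definition trunc :: "nat \<Rightarrow> ell2 \<Rightarrow> ell2" where "trunc N x = (\<Sum>k<N. csc (vec x k) (e k))"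

lemma vec_trunc: "vec (trunc N x) n = (if n < N then vec x n else 0)"
proof -
  have "vec (trunc N x) n = (\<Sum>k<N. vec x k * (if n = k then 1 else 0))"
    by (simp add: trunc_def vec_sum vec_e_apply)
  also have "\<dots> = (\<Sum>k<N. if k = n then vec x k else 0)" by (intro sum.cong) auto
  also have "\<dots> = (if n < N then vec x n else 0)" by (simp add: sum.delta)
  finally show ?thesis .
qed

lemma sum_tail_aux:
  fixes f :: "nat \<Rightarrow> real"
  shows "(\<Sum>n<K. if n < N then 0 else f n) + (\<Sum>n<min K N. f n) = (\<Sum>n<K. f n)"
  by (induction K) (auto simp: min_def split: if_splits)

lemma trunc_lim: "(\<lambda>N. trunc N x) \<longlonglongrightarrow> x"
proof -
  have sx: "summable (sq (vec x))" using vec_l2[of x] by (simp add: l2_iff)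
  have bound: "norm (trunc N x - x) \<le> sqrt (suminf (sq (vec x)) - (\<Sum>n<N. sq (vec x) n))" for N
  proof -
    have v: "vec (trunc N x - x) = (\<lambda>n. if n < N then 0 else - vec x n)"
      by (simp add: vec_trunc fun_eq_iff)
    have "sqrt (\<Sum>n<K. sq (vec (trunc N x - x)) n) \<le> sqrt (suminf (sq (vec x)) - (\<Sum>n<N. sq (vec x) n))" for K
    proof -
      have "(\<Sum>n<K. sq (vec (trunc N x - x)) n) = (\<Sum>n<K. if n < N then 0 else sq (vec x) n)"
        unfolding v by (intro sum.cong) (auto simp: sq_def)
      also have "\<dots> = (\<Sum>n<K. sq (vec x) n) - (\<Sum>n<min K N. sq (vec x) n)"
        using sum_tail_aux[where K=K and N=N and f="sq (vec x)"] by linarith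
      also have "\<dots> \<le> suminf (sq (vec x)) - (\<Sum>n<N. sq (vec x) n)"
      proof (cases "N \<le> K")
        case True then show ?thesis using l2_partial_le[OF vec_l2, of x K] by (simp add: min_absorb2)
      next
        case False then show ?thesis using l2_partial_le[OF vec_l2, of x N] by (simp add: min_absorb1)
      qed
      finally show ?thesis by simp
    qed
    from l2_bounded_norm(2)[OF this] show ?thesis by (simp add: norm_vec)
  qed
  have "(\<lambda>N. sqrt (suminf (sq (vec x)) - (\<Sum>n<N. sq (vec x) n))) \<longlonglongrightarrow> sqrt (suminf (sq (vec x)) - suminf (sq (vec x)))"
    by (intro tendsto_intros summable_LIMSEQ sx)
  then have "(\<lambda>N. sqrt (suminf (sq (vec x)) - (\<Sum>n<N. sq (vec x) n))) \<longlonglongrightarrow> 0" by simp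
  then have "(\<lambda>N. trunc N x - x) \<longlonglongrightarrow> 0"
    by (rule Lim_null_comparison[rotated]) (use bound in auto)
  then show ?thesis by (simp add: LIM_zero_iff)
qed

lemma bl_coord: "bounded_linear (\<lambda>x. vec x i)"
  by (rule bounded_linear_intro[where K=1]) (auto simp: coord_le_norm scaleR_conv_of_real)

lemma coord_tendsto: "X \<longlonglongrightarrow> y \<Longrightarrow> (\<lambda>k. vec (X k) i) \<longlonglongrightarrow> vec y i"
  by (rule bounded_linear.tendsto[OF bl_coord])

lemma expand_lim:
  assumes R: "clin R"
  shows "(\<lambda>N. \<Sum>k<N. vec x k * vec (R (e k)) i) \<longlonglongrightarrow> vec (R x) i"
proof -
  have "(\<lambda>N. vec (R (trunc N x)) i) \<longlonglongrightarrow> vec (R x) i"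
    by (intro coord_tendsto bounded_linear.tendsto[OF blinfun.bounded_linear_right] trunc_lim)
  moreover have "vec (R (trunc N x)) i = (\<Sum>k<N. vec x k * vec (R (e k)) i)" for N
    using R by (simp add: trunc_def blinfun.sum_right clin_def vec_sum)
  ultimately show ?thesis by simp
qed



section \<open>Structure of operators commuting with T\<close>

lemma pr_nz: "\<forall>n. a n \<noteq> 0 \<Longrightarrow> pr a k j \<noteq> 0" by (simp add: pr_def)

lemma pwT_e0:
  assumes M: "\<forall>n. cmod (a n) \<le> M"
  shows "pw (toL (wshift a)) j (e 0) = csc (pr a 0 j) (e j)"
  by (auto simp: vec_inject' fun_eq_iff vec_pwT[OF M] vec_e_apply)

lemma R_e:
  assumes M: "\<forall>n. cmod (a n) \<le> M" and nz: "\<forall>n. a n \<noteq> 0"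
    and cR: "clin R" and RT: "comm R (toL (wshift a))"
  shows "vec (R (e j)) n = (if n < j then 0 else pr a (n - j) j * vec (R (e 0)) (n - j) / pr a 0 j)"
proof -
  let ?T = "toL (wshift a)"
  have "R (pw ?T j (e 0)) = pw ?T j (R (e 0))"
    using comm_pw[OF comm_sym[OF RT], of j] by (simp add: comm_def)
  then have "csc (pr a 0 j) (R (e j)) = pw ?T j (R (e 0))"
    using cR by (simp add: pwT_e0[OF M] clin_def)
  then have "vec (csc (pr a 0 j) (R (e j))) n = vec (pw ?T j (R (e 0))) n" by simp
  then have "pr a 0 j * vec (R (e j)) n = (if n < j then 0 else pr a (n-j) j * vec (R (e 0)) (n-j))"
    by (simp add: vec_pwT[OF M])
  then show ?thesis using pr_nz[OF nz, of 0 j] by (auto simp: field_simps)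
qed

lemma R_e_low:
  assumes M: "\<forall>n. cmod (a n) \<le> M" and nz: "\<forall>n. a n \<noteq> 0"
    and cR: "clin R" and RT: "comm R (toL (wshift a))" and ik: "i < k"
  shows "vec (R (e k)) i = 0"
  by (subst R_e[OF M nz cR RT]) (simp add: ik)

lemma coord_formula:
  assumes M: "\<forall>n. cmod (a n) \<le> M" and nz: "\<forall>n. a n \<noteq> 0"
    and cR: "clin R" and RT: "comm R (toL (wshift a))"
  shows "vec (R x) i = (\<Sum>k\<le>i. vec x k * vec (R (e k)) i)"
proof -
  have lim: "(\<lambda>N. \<Sum>k<N. vec x k * vec (R (e k)) i) \<longlonglongrightarrow> vec (R x) i"
    by (rule expand_lim[OF cR])
  have "\<forall>N\<ge>Suc i. (\<Sum>k<N. vec x k * vec (R (e k)) i) = (\<Sum>k\<le>i. vec x k * vec (R (e k)) i)"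
  proof (intro allI impI)
    fix N assume N: "Suc i \<le> N"
    show "(\<Sum>k<N. vec x k * vec (R (e k)) i) = (\<Sum>k\<le>i. vec x k * vec (R (e k)) i)"
      by (rule sum.mono_neutral_right) (use N in \<open>auto simp: R_e_low[OF M nz cR RT]\<close>)
  qed
  then have "(\<lambda>N. \<Sum>k<N. vec x k * vec (R (e k)) i) \<longlonglongrightarrow> (\<Sum>k\<le>i. vec x k * vec (R (e k)) i)"
    by (intro tendsto_eventually) (auto simp: eventually_sequentially)
  with lim show ?thesis using LIMSEQ_unique by blast
qed

definition lowidx :: "ell2 \<Rightarrow> nat \<Rightarrow> bool" where
  "lowidx y j \<longleftrightarrow> (\<forall>i<j. vec y i = 0) \<and> vec y j \<noteq> 0"

lemma order_lemma:
  assumes M: "\<forall>n. cmod (a n) \<le> M" and nz: "\<forall>n. a n \<noteq> 0"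
    and cR: "clin R" and RT: "comm R (toL (wshift a))" and R0: "R \<noteq> 0"
  shows "\<exists>m. \<forall>x j. lowidx x j \<longrightarrow> lowidx (R x) (j + m)"
proof -
  define r where "r = vec (R (e 0))"
  note Re = R_e[OF M nz cR RT, unfolded r_def[symmetric]]
  note cf = coord_formula[OF M nz cR RT]
  have ex: "\<exists>m. r m \<noteq> 0"
  proof (rule ccontr)
    assume "\<not> ?thesis" then have r0: "\<And>m. r m = 0" by auto
    have "R x = 0" for x
    proof -
      have "vec (R x) i = 0" for i
        by (subst cf) (intro sum.neutral, simp add: Re r0)
      then show ?thesis by (simp add: vec_inject' fun_eq_iff)
    qed
    then have "R = 0" by (intro blinfun_eqI) simp
    with R0 show False by simp
  qed
  define m where "m = (LEAST m. r m \<noteq> 0)"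
  have rm: "r m \<noteq> 0" unfolding m_def by (rule LeastI_ex[OF ex])
  have rlt: "r i = 0" if "i < m" for i using not_less_Least[of i "\<lambda>m. r m \<noteq> 0"] that m_def by auto
  show ?thesis
  proof (intro exI allI impI)
    fix x j assume lx: "lowidx x j"
    have term0: "vec x k * vec (R (e k)) i = 0" if "i < j + m" "k \<le> i" for i k
    proof (cases "k < j")
      case True then show ?thesis using lx by (simp add: lowidx_def)
    next
      case False then have "i - k < m" using that by linarith
      then show ?thesis using that by (simp add: Re rlt)
    qed
    have A: "vec (R x) i = 0" if "i < j + m" for i
      by (subst cf) (intro sum.neutral, use term0 that in auto)
    have term0': "vec x k * vec (R (e k)) (j + m) = 0" if "k \<noteq> j" "k \<le> j + m" for k
    proof (cases "k < j")
      case True then show ?thesis using lx by (simp add: lowidx_def)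
    next
      case False then have "j + m - k < m" "\<not> j + m < k" using that by linarith+
      then show ?thesis by (simp add: Re rlt)
    qed
    have "vec (R x) (j + m) = (\<Sum>k\<in>{j}. vec x k * vec (R (e k)) (j + m))"
      by (subst cf) (rule sum.mono_neutral_right, use term0' in auto)
    also have "\<dots> = vec x j * (pr a m j * r m / pr a 0 j)" by (simp add: Re)
    finally have B: "vec (R x) (j + m) \<noteq> 0"
      using lx rm pr_nz[OF nz, of m j] pr_nz[OF nz, of 0 j] by (simp add: lowidx_def)
    show "lowidx (R x) (j + m)" using A B by (simp add: lowidx_def)
  qed
qed

lemma fromL_zero: "fromL 0 = zero_op" by (simp add: fromL_def zero_op_def fun_eq_iff)

lemma toL_ne0: "is_bounded_op R \<Longrightarrow> R \<noteq> zero_op \<Longrightarrow> toL R \<noteq> 0"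
  using fromL_toL fromL_zero by metis

lemma funpow_bop:
  assumes bR: "is_bounded_op R" and x: "x \<in> l2"
  shows "(R ^^ k) x = vec (pw (toL R) k (Abs_ell2 x))"
proof (induction k)
  case 0 then show ?case using x by (simp add: Abs_ell2_inverse)
next
  case (Suc k) then show ?case by (simp add: vec_toL[OF bR])
qed

lemma lowidx_e0: "lowidx (e 0) 0" by (simp add: lowidx_def vec_e_apply)

lemma part1:
  assumes M: "\<forall>n. cmod (a n) \<le> M" and nz: "\<forall>n. a n \<noteq> 0"
    and R: "R \<in> alg_AT (wshift a)" and S: "S \<in> alg_AT (wshift a)"
    and R0: "R \<noteq> zero_op" and S0: "S \<noteq> zero_op"
  shows "R \<circ> S \<noteq> zero_op"
proof
  assume RS: "R \<circ> S = zero_op"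
  have bR: "is_bounded_op R" and bS: "is_bounded_op S" using alg_AT_approx(1)[OF M] R S by auto
  obtain mR where mR: "\<forall>x j. lowidx x j \<longrightarrow> lowidx (toL R x) (j + mR)"
    using order_lemma[OF M nz toL_clin[OF bR] alg_AT_comm[OF M R] toL_ne0[OF bR R0]] by blast
  obtain mS where mS: "\<forall>x j. lowidx x j \<longrightarrow> lowidx (toL S x) (j + mS)"
    using order_lemma[OF M nz toL_clin[OF bS] alg_AT_comm[OF M S] toL_ne0[OF bS S0]] by blast
  have low: "lowidx (toL R (toL S (e 0))) (0 + mS + mR)" using mR mS lowidx_e0 by blast
  have eq: "(R \<circ> S) (ev 0) = vec (toL R (toL S (e 0)))"
    by (simp add: vec_toL[OF bR] vec_toL[OF bS] vec_e)
  have "vec (toL R (toL S (e 0))) = (\<lambda>n. 0)"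
    using fun_cong[OF RS, of "ev 0"] unfolding eq by (simp add: zero_op_def)
  then show False using low by (simp add: lowidx_def)
qed

lemma part1_nil:
  assumes M: "\<forall>n. cmod (a n) \<le> M" and nz: "\<forall>n. a n \<noteq> 0"
    and R: "R \<in> alg_AT (wshift a)" and R0: "R \<noteq> zero_op"
  shows "\<not> nilpotent_op R"
proof
  assume "nilpotent_op R"
  then obtain k where k: "R ^^ k = zero_op" by (auto simp: nilpotent_op_def)
  have bR: "is_bounded_op R" using alg_AT_approx(1)[OF M] R by auto
  obtain m where m: "\<forall>x j. lowidx x j \<longrightarrow> lowidx (toL R x) (j + m)"
    using order_lemma[OF M nz toL_clin[OF bR] alg_AT_comm[OF M R] toL_ne0[OF bR R0]] by blast
  have low: "lowidx (pw (toL R) n (e 0)) (n * m)" for n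
  proof (induction n)
    case 0 then show ?case using lowidx_e0 by simp
  next
    case (Suc n)
    have "lowidx (toL R (pw (toL R) n (e 0))) (n * m + m)" using m Suc.IH by blast
    then show ?case by (simp add: add.commute)
  qed
  have eq: "(R ^^ k) (ev 0) = vec (pw (toL R) k (e 0))"
    using funpow_bop[OF bR ev_l2] by (simp add: e_def)
  have "vec (pw (toL R) k (e 0)) = (\<lambda>n. 0)"
    using fun_cong[OF k, of "ev 0"] unfolding eq by (simp add: zero_op_def)
  then show False using low[of k] by (simp add: lowidx_def)
qed



section \<open>Quasinilpotence\<close>

lemma l2norm_ev: "l2norm (ev k) = 1"
proof -
  have "sq (ev k) = (\<lambda>n. if n = k then 1 else 0)" by (auto simp: sq_def ev_def fun_eq_iff)
  then have "suminf (sq (ev k)) = 1" using sums_single[of k "\<lambda>_. 1::real"] sums_unique by fastforce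
  then show ?thesis by (simp add: l2norm_sq)
qed

lemma quasi_T_bound:
  assumes M: "\<forall>n. cmod (a n) \<le> M" and nz: "\<forall>n. a n \<noteq> 0"
    and q: "quasinilpotent (wshift a)" and d: "0 < \<delta>"
  shows "\<exists>C>0. \<forall>k j. cmod (pr a k j) \<le> C * \<delta> ^ (j + 1)"
proof -
  define \<mu> where "\<mu> = complex_of_real \<delta>"
  have \<mu>0: "\<mu> \<noteq> 0" using d by (simp add: \<mu>_def)
  have "\<mu> \<notin> op_spectrum (wshift a)" using q \<mu>0 by (simp add: quasinilpotent_def)
  then obtain B where bB: "is_bounded_op B"
    and inv2: "\<forall>x\<in>l2. (\<lambda>n. wshift a (B x) n - \<mu> * B x n) = x"
    by (auto simp: op_spectrum_def)
  obtain C where C: "\<forall>x\<in>l2. l2norm (B x) \<le> C * l2norm x" using bB by (auto simp: is_bounded_op_def)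
  have key: "cmod (pr a k j) \<le> C * \<delta> ^ (j + 1)" for k j
  proof -
    define y where "y = B (ev k)"
    have yl2: "y \<in> l2" unfolding y_def by (rule bop_l2[OF bB ev_l2])
    have eq: "wshift a y n - \<mu> * y n = ev k n" for n
      using fun_cong[OF inv2[rule_format, OF ev_l2[of k]], of n] unfolding y_def .
    have wy: "wshift a y n = (if n = 0 then 0 else a (n - 1) * y (n - 1))" for n
      using yl2 by (simp add: wshift_def)
    have low: "n < k \<longrightarrow> y n = 0" for n
    proof (induction n)
      case 0 show ?case using eq[of 0] \<mu>0 by (auto simp: wy ev_def)
    next
      case (Suc n) show ?case using eq[of "Suc n"] \<mu>0 Suc by (auto simp: wy ev_def)
    qed
    have h: "- (\<mu> * y k) = 1"
    proof (cases k)
      case 0 then show ?thesis using eq[of 0] by (simp add: wy ev_def)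
    next
      case (Suc k') then show ?thesis using eq[of k] low[of k'] by (simp add: wy ev_def)
    qed
    have yk: "y k = - 1 / \<mu>" using h \<mu>0 by (simp add: field_simps) (metis add.inverse_inverse)
    have yj: "y (k + j) = - pr a k j / \<mu> ^ (j + 1)" for j
    proof (induction j)
      case 0 then show ?case using yk by (simp add: pr_def)
    next
      case (Suc j)
      have "a (k + j) * y (k + j) - \<mu> * y (k + Suc j) = 0" using eq[of "k + Suc j"] by (simp add: wy ev_def)
      then have e1: "\<mu> * y (k + Suc j) = a (k + j) * y (k + j)" by simp
      have e2: "\<mu> ^ (j + 1) * y (k + j) = - pr a k j" using Suc \<mu>0 by (simp add: field_simps)
      have "\<mu> ^ (Suc j + 1) * y (k + Suc j) = \<mu> ^ (j + 1) * (\<mu> * y (k + Suc j))" by (simp add: algebra_simps)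
      also have "\<dots> = a (k + j) * (\<mu> ^ (j + 1) * y (k + j))" unfolding e1 by (simp add: algebra_simps)
      also have "\<dots> = - pr a k (Suc j)" unfolding e2 by (simp add: pr_Suc algebra_simps)
      finally show ?case using \<mu>0 by (simp add: field_simps)
    qed
    have "cmod (y (k + j)) \<le> l2norm y" by (rule coord_le_l2norm[OF yl2])
    also have "\<dots> \<le> C * l2norm (ev k)" using C ev_l2 unfolding y_def by blast
    finally have "cmod (pr a k j) / \<delta> ^ (j + 1) \<le> C"
      using d by (simp add: yj l2norm_ev \<mu>_def norm_divide norm_power norm_mult)
    then show ?thesis using d by (simp add: field_simps)
  qed
  have "1 \<le> C * \<delta>" using key[of 0 0] by (simp add: pr_def)
  then have "C > 0" using d by (smt (verit) mult_nonpos_nonneg)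
  with key show ?thesis by blast
qed


lemma csc_0[simp]: "csc 0 x = 0" by (simp add: vec_inject' fun_eq_iff)

lemma polyL_factor:
  assumes cT: "clin T" and p0: "poly p 0 = 0"
  defines "Q \<equiv> (\<Sum>i\<le>degree p. cs (coeff p (Suc i)) o\<^sub>L pw T i)"
  shows "polyL T p = T o\<^sub>L Q" "comm T Q"
proof -
  show "comm T Q" unfolding Q_def
    by (intro comm_sym[OF comm_sum] comm_comp comm_cs comm_pw comm_refl cT)
  have c0: "coeff p 0 = 0" using p0 by (simp add: poly_0_coeff_0)
  show "polyL T p = T o\<^sub>L Q"
  proof (rule blinfun_eqI)
    fix x
    define f where "f i = csc (coeff p i) (pw T i x)" for i
    have "polyL T p x = (\<Sum>i\<le>degree p. f i)" by (simp add: polyL_def f_def blinfun.sum_left)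
    also have "\<dots> = (\<Sum>i\<le>Suc (degree p). f i)" by (simp add: f_def coeff_eq_0)
    also have "\<dots> = (\<Sum>i\<le>degree p. f (Suc i))" by (subst sum.atMost_Suc_shift) (simp add: f_def c0)
    also have "\<dots> = (T o\<^sub>L Q) x"
      using cT by (simp add: Q_def f_def blinfun.sum_left blinfun.sum_right clin_def)
    finally show "polyL T p x = (T o\<^sub>L Q) x" .
  qed
qed

lemma poly_power_bound:
  assumes M: "\<forall>n. cmod (a n) \<le> M" and nz: "\<forall>n. a n \<noteq> 0"
    and q: "quasinilpotent (wshift a)" and p0: "poly p 0 = 0" and eps: "0 < \<epsilon>"
  shows "\<exists>C\<ge>0. \<forall>j. norm (pw (polyL (toL (wshift a)) p) j) \<le> C * \<epsilon> ^ j"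
proof -
  define T where "T = toL (wshift a)"
  have cT: "clin T" unfolding T_def by (rule toL_clin[OF wshift_bop[OF M]])
  define Q where "Q = (\<Sum>i\<le>degree p. cs (coeff p (Suc i)) o\<^sub>L pw T i)"
  have fac: "polyL T p = T o\<^sub>L Q" and cTQ: "comm T Q" using polyL_factor[OF cT p0] unfolding Q_def by auto
  define \<delta> where "\<delta> = \<epsilon> / (norm Q + 1)"
  have d: "0 < \<delta>" unfolding \<delta>_def by (intro divide_pos_pos eps) (smt (verit) norm_ge_zero)
  have dQ: "\<delta> * norm Q \<le> \<epsilon>"
  proof -
    have "\<delta> * norm Q = \<epsilon> * (norm Q / (norm Q + 1))" by (simp add: \<delta>_def)
    also have "\<dots> \<le> \<epsilon> * 1"
      using eps norm_ge_zero[of Q] by (intro mult_left_mono) (simp_all add: divide_le_eq_1 add_nonneg_pos)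
    finally show ?thesis by simp
  qed
  obtain C where C0: "C > 0" and C: "\<forall>k j. cmod (pr a k j) \<le> C * \<delta> ^ (j + 1)"
    using quasi_T_bound[OF M nz q d] by blast
  have nT: "norm (pw T j) \<le> C * \<delta> ^ (j + 1)" for j
    unfolding T_def by (rule norm_pwT[OF M]) (use C in blast)
  show ?thesis
  proof (intro exI[of _ "C * \<delta>"] conjI allI)
    show "0 \<le> C * \<delta>" using C0 d by simp
    fix j
    have "norm (pw (polyL T p) j) = norm (pw T j o\<^sub>L pw Q j)" by (simp add: fac pw_comp[OF cTQ])
    also have "\<dots> \<le> norm (pw T j) * norm (pw Q j)" by (rule norm_blinfun_compose)
    also have "\<dots> \<le> (C * \<delta> ^ (j + 1)) * norm Q ^ j"
      by (intro mult_mono nT norm_pw) (use C0 d in auto)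
    also have "\<dots> = (C * \<delta>) * (\<delta> * norm Q) ^ j" by (simp add: power_mult_distrib algebra_simps)
    also have "\<dots> \<le> (C * \<delta>) * \<epsilon> ^ j"
      by (intro mult_left_mono power_mono dQ) (use C0 d in auto)
    finally show "norm (pw (polyL (toL (wshift a)) p) j) \<le> C * \<delta> * \<epsilon> ^ j" unfolding T_def .
  qed
qed

lemma binom_bound:
  assumes cEP: "comm E P" and E: "norm E \<le> \<eta>" and P: "\<forall>j. norm (pw P j) \<le> C * \<epsilon> ^ j"
  shows "norm (pw (P + E) n o\<^sub>L pw P m) \<le> C * \<epsilon> ^ m * (\<epsilon> + \<eta>) ^ n"
proof (induction n arbitrary: m)
  case 0
  have "pw (P + E) 0 o\<^sub>L pw P m = pw P m" by (auto intro: blinfun_eqI)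
  then show ?case using P by simp
next
  case (Suc n)
  have cm: "comm E (pw P m)" using comm_pw[OF comm_sym[OF cEP], of m] by (rule comm_sym)
  have eq: "pw (P + E) (Suc n) o\<^sub>L pw P m = (pw (P + E) n o\<^sub>L pw P (Suc m)) + ((pw (P + E) n o\<^sub>L pw P m) o\<^sub>L E)"
  proof (rule blinfun_eqI)
    fix x
    have h: "E (pw P m x) = pw P m (E x)" using cm by (simp add: comm_def)
    have "(pw (P + E) (Suc n) o\<^sub>L pw P m) x = pw (P + E) n ((P + E) (pw P m x))"
      by (simp only: blinfun_apply_blinfun_compose pw_Suc2)
    also have "\<dots> = pw (P + E) n (pw P (Suc m) x) + pw (P + E) n (pw P m (E x))"
      by (simp add: blinfun.add_left blinfun.add_right h)
    also have "\<dots> = ((pw (P + E) n o\<^sub>L pw P (Suc m)) + ((pw (P + E) n o\<^sub>L pw P m) o\<^sub>L E)) x"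
      by (simp only: blinfun_apply_blinfun_compose blinfun.add_left)
    finally show "(pw (P + E) (Suc n) o\<^sub>L pw P m) x = ((pw (P + E) n o\<^sub>L pw P (Suc m)) + ((pw (P + E) n o\<^sub>L pw P m) o\<^sub>L E)) x" .
  qed
  have "norm (pw (P + E) (Suc n) o\<^sub>L pw P m)
      \<le> norm (pw (P + E) n o\<^sub>L pw P (Suc m)) + norm ((pw (P + E) n o\<^sub>L pw P m) o\<^sub>L E)"
    unfolding eq by (rule norm_triangle_ineq)
  also have "\<dots> \<le> C * \<epsilon> ^ Suc m * (\<epsilon> + \<eta>) ^ n + (C * \<epsilon> ^ m * (\<epsilon> + \<eta>) ^ n) * \<eta>"
  proof (rule add_mono)
    show "norm (pw (P + E) n o\<^sub>L pw P (Suc m)) \<le> C * \<epsilon> ^ Suc m * (\<epsilon> + \<eta>) ^ n" by (rule Suc.IH)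
    have "norm ((pw (P + E) n o\<^sub>L pw P m) o\<^sub>L E) \<le> norm (pw (P + E) n o\<^sub>L pw P m) * norm E"
      by (rule norm_blinfun_compose)
    also have "\<dots> \<le> norm (pw (P + E) n o\<^sub>L pw P m) * \<eta>" by (intro mult_left_mono E) simp
    also have "\<dots> \<le> (C * \<epsilon> ^ m * (\<epsilon> + \<eta>) ^ n) * \<eta>"
      by (intro mult_right_mono Suc.IH) (use E norm_ge_zero order_trans in blast)
    finally show "norm ((pw (P + E) n o\<^sub>L pw P m) o\<^sub>L E) \<le> (C * \<epsilon> ^ m * (\<epsilon> + \<eta>) ^ n) * \<eta>" .
  qed
  also have "\<dots> = C * \<epsilon> ^ m * (\<epsilon> + \<eta>) ^ Suc n" by (simp add: algebra_simps)
  finally show ?case .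
qed


lemma neumann:
  fixes A :: "ell2 \<Rightarrow>\<^sub>L ell2"
  assumes bnd: "\<forall>n. norm (pw A n) \<le> C * q ^ n" and q0: "0 \<le> q" and q1: "q < 1"
  shows "summable (pw A)" "\<forall>x. suminf (pw A) x - A (suminf (pw A) x) = x"
    "\<forall>x. suminf (pw A) x - suminf (pw A) (A x) = x"
proof -
  have sg: "summable (\<lambda>n. C * q ^ n)" using q0 q1 by (intro summable_mult summable_geometric) simp
  show sA: "summable (pw A)" by (rule summable_comparison_test'[OF sg]) (use bnd in auto)
  define S where "S = suminf (pw A)"
  have Sx: "(\<lambda>n. pw A n x) sums S x" for x
    unfolding S_def by (rule bounded_linear.sums[OF blinfun.bounded_linear_left summable_sums[OF sA]])
  have z: "(\<lambda>n. pw A n x) \<longlonglongrightarrow> 0" for x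
  proof (rule Lim_null_comparison)
    show "\<forall>\<^sub>F n in sequentially. norm (pw A n x) \<le> C * q ^ n * norm x"
    proof (intro always_eventually allI)
      fix n
      have "norm (pw A n x) \<le> norm (pw A n) * norm x" by (rule norm_blinfun)
      also have "\<dots> \<le> C * q ^ n * norm x" using bnd by (intro mult_right_mono) auto
      finally show "norm (pw A n x) \<le> C * q ^ n * norm x" .
    qed
    have "(\<lambda>n. q ^ n) \<longlonglongrightarrow> 0" by (rule LIMSEQ_realpow_zero[OF q0 q1])
    from tendsto_mult[OF tendsto_mult[OF tendsto_const[of C] this] tendsto_const[of "norm x"]]
    show "(\<lambda>n. C * q ^ n * norm x) \<longlonglongrightarrow> 0" by simp
  qed
  have tel: "(\<lambda>n. pw A n x - pw A (Suc n) x) sums x" for x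
    using telescope_sums'[OF z[of x]] by simp
  show "\<forall>x. suminf (pw A) x - A (suminf (pw A) x) = x"
  proof
    fix x
    have "(\<lambda>n. A (pw A n x)) sums A (S x)"
      by (rule bounded_linear.sums[OF blinfun.bounded_linear_right Sx])
    then have "(\<lambda>n. pw A n x - pw A (Suc n) x) sums (S x - A (S x))"
      using sums_diff[OF Sx] by simp
    then show "suminf (pw A) x - A (suminf (pw A) x) = x" using tel sums_unique2 unfolding S_def by blast
  qed
  show "\<forall>x. suminf (pw A) x - suminf (pw A) (A x) = x"
  proof
    fix x
    have "(\<lambda>n. pw A n (A x)) sums S (A x)" by (rule Sx)
    moreover have "pw A n (A x) = pw A (Suc n) x" for n by (simp only: pw_Suc2)
    ultimately have "(\<lambda>n. pw A (Suc n) x) sums S (A x)" by simp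
    then have "(\<lambda>n. pw A n x - pw A (Suc n) x) sums (S x - S (A x))"
      using sums_diff[OF Sx] by simp
    then show "suminf (pw A) x - suminf (pw A) (A x) = x" using tel sums_unique2 unfolding S_def by blast
  qed
qed

lemma resolvent:
  assumes cR: "clin R" and \<mu>0: "\<mu> \<noteq> 0" and bnd: "\<forall>n. norm (pw R n) \<le> C * (cmod \<mu> / 2) ^ n"
  shows "\<exists>BL. clin BL \<and> (\<forall>x. BL (R x - csc \<mu> x) = x) \<and> (\<forall>x. R (BL x) - csc \<mu> (BL x) = x)"
proof -
  define R' where "R' = cs (1 / \<mu>) o\<^sub>L R"
  have cR': "clin R'" by (simp add: R'_def clin_comp clin_cs cR)
  have Rc: "R (csc c y) = csc c (R y)" for c y using cR by (simp add: clin_def)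
  have R'c: "R' (csc c y) = csc c (R' y)" for c y using cR' by (simp add: clin_def)
  have pwR': "pw R' n = cs (1 / \<mu> ^ n) o\<^sub>L pw R n" for n
  proof (induction n)
    case 0 show ?case by (auto intro!: blinfun_eqI)
  next
    case (Suc n) show ?case
    proof (rule blinfun_eqI)
      fix i
      have "pw R' (Suc n) i = R' (csc (1 / \<mu> ^ n) (pw R n i))" by (simp add: Suc.IH)
      also have "\<dots> = csc (1 / \<mu> * (1 / \<mu> ^ n)) (R (pw R n i))" by (simp add: R'_def Rc csc_csc)
      also have "\<dots> = (cs (1 / \<mu> ^ Suc n) o\<^sub>L pw R (Suc n)) i" by simp
      finally show "pw R' (Suc n) i = (cs (1 / \<mu> ^ Suc n) o\<^sub>L pw R (Suc n)) i" .
    qed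
  qed
  have bnd': "\<forall>n. norm (pw R' n) \<le> C * (1 / 2) ^ n"
  proof
    fix n
    have "norm (pw R' n) \<le> norm (cs (1 / \<mu> ^ n)) * norm (pw R n)"
      unfolding pwR' by (rule norm_blinfun_compose)
    also have "\<dots> \<le> cmod (1 / \<mu> ^ n) * (C * (cmod \<mu> / 2) ^ n)"
      using bnd by (intro mult_mono norm_cs) auto
    also have "\<dots> = C * (1 / 2) ^ n" using \<mu>0 by (simp add: norm_divide norm_power power_divide)
    finally show "norm (pw R' n) \<le> C * (1 / 2) ^ n" .
  qed
  have h12: "0 \<le> (1/2::real)" "(1/2::real) < 1" by auto
  note N = neumann[OF bnd' h12]
  define S where "S = suminf (pw R')"
  have sA: "summable (pw R')" and id1: "\<And>x. S x - R' (S x) = x" and id2: "\<And>x. S x - S (R' x) = x"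
    using N unfolding S_def by auto
  have cS: "clin S" unfolding S_def
    by (rule clin_limit[OF summable_LIMSEQ[OF sA]]) (intro clin_sum clin_pw cR')
  have Sc: "S (csc c y) = csc c (S y)" for c y using cS by (simp add: clin_def)
  define BL where "BL = cs (- 1 / \<mu>) o\<^sub>L S"
  have ident: "R x - csc \<mu> x = csc (- \<mu>) (x - R' x)" for x
    using \<mu>0 by (simp add: R'_def vec_inject' fun_eq_iff field_simps)
  show ?thesis
  proof (intro exI[of _ BL] conjI allI)
    show "clin BL" by (simp add: BL_def clin_comp clin_cs cS)
    fix x
    have "BL (R x - csc \<mu> x) = csc (- 1 / \<mu>) (csc (- \<mu>) (S x - S (R' x)))"
      by (simp add: BL_def ident Sc blinfun.diff_right)
    also have "\<dots> = x" using \<mu>0 by (simp add: id2 csc_csc)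
    finally show "BL (R x - csc \<mu> x) = x" .
  next
    fix x
    have "R (BL x) - csc \<mu> (BL x) = csc (- \<mu>) (csc (- 1 / \<mu>) (S x - R' (S x)))"
      by (simp add: ident BL_def R'c csc_diff)
    also have "\<dots> = x" using \<mu>0 by (simp add: id1 csc_csc)
    finally show "R (BL x) - csc \<mu> (BL x) = x" .
  qed
qed


lemma RL_coord0:
  assumes M: "\<forall>n. cmod (a n) \<le> M" and R: "R \<in> alg_AT (wshift a)"
  shows "vec (toL R y) 0 = 0"
proof -
  obtain p where p0: "\<forall>k. poly (p k) 0 = 0"
    and lim: "(\<lambda>k. polyL (toL (wshift a)) (p k)) \<longlonglongrightarrow> toL R"
    using alg_AT_approx(2)[OF M R] by blast
  have z: "vec (polyL (toL (wshift a)) (p k) y) 0 = 0" for k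
  proof -
    have c0: "coeff (p k) 0 = 0" using p0 by (simp add: poly_0_coeff_0)
    have "vec (polyL (toL (wshift a)) (p k) y) 0
        = (\<Sum>i\<le>degree (p k). coeff (p k) i * vec (pw (toL (wshift a)) i y) 0)"
      by (simp add: polyL_def blinfun.sum_left vec_sum)
    also have "\<dots> = 0"
    proof (intro sum.neutral ballI)
      fix i show "coeff (p k) i * vec (pw (toL (wshift a)) i y) 0 = 0"
        using c0 by (cases i) (simp_all add: vec_T[OF M])
    qed
    finally show ?thesis .
  qed
  have "(\<lambda>k. vec (polyL (toL (wshift a)) (p k) y) 0) \<longlonglongrightarrow> vec (toL R y) 0"
    by (intro coord_tendsto blinfun.tendsto[OF lim tendsto_const])
  then show ?thesis using z LIMSEQ_unique[OF _ tendsto_const] by simp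
qed

lemma RL_power_bound:
  assumes M: "\<forall>n. cmod (a n) \<le> M" and nz: "\<forall>n. a n \<noteq> 0"
    and q: "quasinilpotent (wshift a)" and R: "R \<in> alg_AT (wshift a)" and \<rho>: "0 < \<rho>"
  shows "\<exists>C. \<forall>n. norm (pw (toL R) n) \<le> C * (\<rho> / 2) ^ n"
proof -
  have bR: "is_bounded_op R" using alg_AT_approx(1)[OF M R] .
  define T where "T = toL (wshift a)"
  obtain p where p0: "\<forall>k. poly (p k) 0 = 0" and lim: "(\<lambda>k. polyL T (p k)) \<longlonglongrightarrow> toL R"
    using alg_AT_approx(2)[OF M R] unfolding T_def by blast
  have "\<rho> / 4 > 0" using \<rho> by simp
  then obtain k where k: "norm (polyL T (p k) - toL R) < \<rho> / 4"
    using lim unfolding LIMSEQ_iff by blast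
  define P where "P = polyL T (p k)"
  define E where "E = toL R - P"
  obtain C where C: "\<forall>j. norm (pw P j) \<le> C * (\<rho> / 4) ^ j"
    using poly_power_bound[OF M nz q p0[rule_format, of k] \<open>\<rho> / 4 > 0\<close>] unfolding P_def T_def by blast
  have cRL: "clin (toL R)" by (rule toL_clin[OF bR])
  have cT: "clin T" unfolding T_def by (rule toL_clin[OF wshift_bop[OF M]])
  have cRT: "comm (toL R) T" unfolding T_def by (rule alg_AT_comm[OF M R])
  have cPR: "comm P (toL R)" unfolding P_def by (rule comm_polyL[OF cRL comm_sym[OF cRT]])
  have cEP: "comm E P" unfolding E_def by (intro comm_diff comm_sym[OF cPR] comm_refl)
  have nE: "norm E \<le> \<rho> / 4" using k by (simp add: E_def P_def norm_minus_commute)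
  have "norm (pw (P + E) n o\<^sub>L pw P 0) \<le> C * (\<rho> / 4) ^ 0 * (\<rho> / 4 + \<rho> / 4) ^ n" for n
    by (rule binom_bound[OF cEP nE C])
  moreover have "pw (P + E) n o\<^sub>L pw P 0 = pw (toL R) n" for n
    by (auto simp: E_def intro!: blinfun_eqI)
  ultimately have "norm (pw (toL R) n) \<le> C * (\<rho> / 2) ^ n" for n by simp
  then show ?thesis by blast
qed

lemma part2:
  assumes M: "\<forall>n. cmod (a n) \<le> M" and nz: "\<forall>n. a n \<noteq> 0"
    and q: "quasinilpotent (wshift a)" and R: "R \<in> alg_AT (wshift a)"
  shows "quasinilpotent R"
proof -
  have bR: "is_bounded_op R" using alg_AT_approx(1)[OF M R] .
  define RL where "RL = toL R"
  have cRL: "clin RL" unfolding RL_def by (rule toL_clin[OF bR])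
  have Rvec: "R (vec z) = vec (RL z)" for z unfolding RL_def by (simp add: vec_toL[OF bR])
  have in0: "0 \<in> op_spectrum R"
  proof (rule ccontr)
    assume "0 \<notin> op_spectrum R"
    then obtain B where bB: "is_bounded_op B"
      and inv2: "\<forall>x\<in>l2. (\<lambda>n. R (B x) n - 0 * B x n) = x"
      by (auto simp: op_spectrum_def)
    have Bl2: "B (ev 0) \<in> l2" by (rule bop_l2[OF bB ev_l2])
    have "R (B (ev 0)) 0 = ev 0 0" using fun_cong[OF inv2[rule_format, OF ev_l2[of 0]], of 0] by simp
    moreover have "R (B (ev 0)) = vec (RL (Abs_ell2 (B (ev 0))))"
      using Rvec[of "Abs_ell2 (B (ev 0))"] Bl2 by (simp add: Abs_ell2_inverse)
    moreover have "vec (RL (Abs_ell2 (B (ev 0)))) 0 = 0" unfolding RL_def by (rule RL_coord0[OF M R])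
    ultimately show False by (simp add: ev_def)
  qed
  have notin: "\<mu> \<notin> op_spectrum R" if \<mu>0: "\<mu> \<noteq> 0" for \<mu>
  proof -
    have "0 < cmod \<mu>" using \<mu>0 by simp
    then obtain C where C: "\<forall>n. norm (pw RL n) \<le> C * (cmod \<mu> / 2) ^ n"
      using RL_power_bound[OF M nz q R] unfolding RL_def by blast
    obtain BL where cBL: "clin BL" and i1: "\<And>x. BL (RL x - csc \<mu> x) = x"
      and i2: "\<And>x. RL (BL x) - csc \<mu> (BL x) = x"
      using resolvent[OF cRL \<mu>0 C] by blast
    define B where "B = fromL BL"
    have bB: "is_bounded_op B" unfolding B_def by (rule fromL_bop[OF cBL])
    have e1: "B (\<lambda>n. R x n - \<mu> * x n) = x" if x: "x \<in> l2" for x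
    proof -
      define X where "X = Abs_ell2 x"
      have xX: "x = vec X" using x by (simp add: X_def Abs_ell2_inverse)
      have y: "(\<lambda>n. R x n - \<mu> * x n) = vec (RL X - csc \<mu> X)" unfolding xX Rvec by simp
      have "B (\<lambda>n. R x n - \<mu> * x n) = B (vec (RL X - csc \<mu> X))" unfolding y ..
      also have "\<dots> = vec (BL (RL X - csc \<mu> X))"
        unfolding B_def fromL_def vec_inverse by (simp only: vec_l2 if_True)
      also have "\<dots> = x" using i1 xX by simp
      finally show ?thesis .
    qed
    have e2: "(\<lambda>n. R (B x) n - \<mu> * B x n) = x" if x: "x \<in> l2" for x
    proof -
      define X where "X = Abs_ell2 x"
      have xX: "x = vec X" using x by (simp add: X_def Abs_ell2_inverse)
      have Bx: "B x = vec (BL X)" using x by (simp add: B_def fromL_def X_def)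
      have "(\<lambda>n. R (B x) n - \<mu> * B x n) = vec (RL (BL X) - csc \<mu> (BL X))" unfolding Bx Rvec by simp
      then show ?thesis using i2 xX by simp
    qed
    show ?thesis unfolding op_spectrum_def using bB e1 e2 by blast
  qed
  have "op_spectrum R = {0}" using in0 notin by blast
  then show ?thesis by (simp add: quasinilpotent_def)
qed


theorem mainTheorem14:
  fixes a :: "nat \<Rightarrow> complex"
  assumes bdd: "\<exists>M. \<forall>n. cmod (a n) \<le> M"
    and nz: "\<forall>n. a n \<noteq> 0"
  shows "(\<forall>R\<in>alg_AT (wshift a). \<forall>S\<in>alg_AT (wshift a).
            R \<noteq> zero_op \<longrightarrow> S \<noteq> zero_op \<longrightarrow> R \<circ> S \<noteq> zero_op)
         \<and> (quasinilpotent (wshift a) \<longrightarrow>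
              (\<forall>R\<in>alg_AT (wshift a). R \<noteq> zero_op \<longrightarrow>
                  quasinilpotent R \<and> \<not> nilpotent_op R))"
proof -
  obtain M where M: "\<forall>n. cmod (a n) \<le> M" using bdd by blast
  have A: "\<forall>R\<in>alg_AT (wshift a). \<forall>S\<in>alg_AT (wshift a).
            R \<noteq> zero_op \<longrightarrow> S \<noteq> zero_op \<longrightarrow> R \<circ> S \<noteq> zero_op"
    using part1[OF M nz] by blast
  have B: "quasinilpotent (wshift a) \<longrightarrow>
              (\<forall>R\<in>alg_AT (wshift a). R \<noteq> zero_op \<longrightarrow>
                  quasinilpotent R \<and> \<not> nilpotent_op R)"
    using part2[OF M nz] part1_nil[OF M nz] by blast
  from A B show ?thesis by blast
qed

end
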